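(* Let $A$ be an algebra over a field $\Bbbk$ that admits a normalized nearly Frobenius coproduct. Then $A$ is semisimple.
   Context: Algebras are associative and unital; tensor products over $\Bbbk$; $m$ denotes multiplication. A nearly Frobenius coproduct on $A$ is a $\Bbbk$-linear map $\Delta:A\to A\otimes A$ with $\Delta\circ m=(1\otimes m)\circ(\Delta\otimes 1)=(m\otimes 1)\circ(1\otimes\Delta)$; it is normalized if $m\circ\Delta=\operatorname{Id}_A$. Semisimple means: $A$ is finite-dimensional and every left $A$-module is projective. *)

theory Defs
  imports Complex_Main
begin

definition k_algebra :: "('k::field \<Rightarrow> 'a::ring_1 \<Rightarrow> 'a) \<Rightarrow> bool" where
  "k_algebra scale \<longleftrightarrow> vector_space scale \<and>
     (\<forall>c a b. scale c (a * b) = scale c a * b) \<and>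
     (\<forall>c a b. scale c (a * b) = a * scale c b)"

text \<open>An element of A (x) A is represented by a list [(x1,y1),...,(xn,yn)] standing for the
sum of the simple tensors xi (x) yi (every tensor is such a finite sum).  Two lists represent
the same tensor iff the difference of the associated finitely supported functions
A x A -> k lies in the k-span of the bilinearity relations (the standard construction of
the tensor product as a quotient of the free vector space on A x A).\<close>

definition tens_fun :: "('a \<times> 'a) list \<Rightarrow> ('a \<times> 'a \<Rightarrow> 'k::field)" where
  "tens_fun L = (\<lambda>q. sum_list (map (\<lambda>p. if p = q then 1 else 0) L))"

definition delta :: "'a \<times> 'a \<Rightarrow> ('a \<times> 'a \<Rightarrow> 'k::field)" where
  "delta p = (\<lambda>q. if q = p then 1 else 0)"

inductive_set tens_null :: "('k::field \<Rightarrow> 'a::ring_1 \<Rightarrow> 'a) \<Rightarrow> ('a \<times> 'a \<Rightarrow> 'k) set"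
  for scale where
  zero: "(\<lambda>q. 0) \<in> tens_null scale"
| add: "f \<in> tens_null scale \<Longrightarrow> g \<in> tens_null scale \<Longrightarrow> (\<lambda>q. f q + g q) \<in> tens_null scale"
| smult: "f \<in> tens_null scale \<Longrightarrow> (\<lambda>q. c * f q) \<in> tens_null scale"
| add_left: "(\<lambda>q. delta (x + x', y) q - delta (x, y) q - delta (x', y) q) \<in> tens_null scale"
| add_right: "(\<lambda>q. delta (x, y + y') q - delta (x, y) q - delta (x, y') q) \<in> tens_null scale"
| scale_left: "(\<lambda>q. delta (scale c x, y) q - c * delta (x, y) q) \<in> tens_null scale"
| scale_right: "(\<lambda>q. delta (x, scale c y) q - c * delta (x, y) q) \<in> tens_null scale"

definition tens_eq :: "('k::field \<Rightarrow> 'a::ring_1 \<Rightarrow> 'a) \<Rightarrow> ('a \<times> 'a) list \<Rightarrow> ('a \<times> 'a) list \<Rightarrow> bool" where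
  "tens_eq scale L M \<longleftrightarrow> (\<lambda>q. tens_fun L q - tens_fun M q) \<in> tens_null scale"

definition tens_mult :: "('a::ring_1 \<times> 'a) list \<Rightarrow> 'a" where
  "tens_mult L = sum_list (map (\<lambda>(x, y). x * y) L)"

definition tens_lact :: "'a::ring_1 \<Rightarrow> ('a \<times> 'a) list \<Rightarrow> ('a \<times> 'a) list" where
  "tens_lact a L = map (\<lambda>(x, y). (a * x, y)) L"

definition tens_ract :: "('a::ring_1 \<times> 'a) list \<Rightarrow> 'a \<Rightarrow> ('a \<times> 'a) list" where
  "tens_ract L b = map (\<lambda>(x, y). (x, y * b)) L"

text \<open>Delta is k-linear; Delta o m = (1 (x) m) o (Delta (x) 1) = (m (x) 1) o (1 (x) Delta),
evaluated on simple tensors a (x) b (which span A (x) A): Delta(ab) = Delta(a) b = a Delta(b).\<close>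
definition nearly_frobenius :: "('k::field \<Rightarrow> 'a::ring_1 \<Rightarrow> 'a) \<Rightarrow> ('a \<Rightarrow> ('a \<times> 'a) list) \<Rightarrow> bool" where
  "nearly_frobenius scale \<Delta> \<longleftrightarrow>
     (\<forall>a b. tens_eq scale (\<Delta> (a + b)) (\<Delta> a @ \<Delta> b)) \<and>
     (\<forall>c a. tens_eq scale (\<Delta> (scale c a)) (map (\<lambda>(x, y). (scale c x, y)) (\<Delta> a))) \<and>
     (\<forall>a b. tens_eq scale (\<Delta> (a * b)) (tens_ract (\<Delta> a) b)) \<and>
     (\<forall>a b. tens_eq scale (\<Delta> (a * b)) (tens_lact a (\<Delta> b)))"

definition normalized_nearly_frobenius :: "('k::field \<Rightarrow> 'a::ring_1 \<Rightarrow> 'a) \<Rightarrow> ('a \<Rightarrow> ('a \<times> 'a) list) \<Rightarrow> bool" where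
  "normalized_nearly_frobenius scale \<Delta> \<longleftrightarrow>
     nearly_frobenius scale \<Delta> \<and> (\<forall>a. tens_mult (\<Delta> a) = a)"

definition lmod :: "('a::ring_1 \<Rightarrow> 'm::ab_group_add \<Rightarrow> 'm) \<Rightarrow> bool" where
  "lmod s \<longleftrightarrow> (\<forall>a x y. s a (x + y) = s a x + s a y) \<and>
              (\<forall>a b x. s (a + b) x = s a x + s b x) \<and>
              (\<forall>a b x. s (a * b) x = s a (s b x)) \<and>
              (\<forall>x. s 1 x = x)"

definition lhom :: "('a::ring_1 \<Rightarrow> 'm::ab_group_add \<Rightarrow> 'm) \<Rightarrow> ('a \<Rightarrow> 'n::ab_group_add \<Rightarrow> 'n) \<Rightarrow> ('m \<Rightarrow> 'n) \<Rightarrow> bool" where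
  "lhom sM sN f \<longleftrightarrow> (\<forall>x y. f (x + y) = f x + f y) \<and> (\<forall>a x. f (sM a x) = sN a (f x))"

text \<open>Since type variables of a theorem
are universally quantified, a theorem stating this for free 'm, 'n gives projectivity.\<close>
definition projective_lmod :: "('a::ring_1 \<Rightarrow> 'p::ab_group_add \<Rightarrow> 'p) \<Rightarrow> 'm::ab_group_add itself \<Rightarrow> 'n::ab_group_add itself \<Rightarrow> bool" where
  "projective_lmod sP _ _ \<longleftrightarrow>
     (\<forall>(sM :: 'a \<Rightarrow> 'm \<Rightarrow> 'm) (sN :: 'a \<Rightarrow> 'n \<Rightarrow> 'n) g f.
        lmod sM \<and> lmod sN \<and> lhom sM sN g \<and> surj g \<and> lhom sP sN f \<longrightarrow>
        (\<exists>h. lhom sP sM h \<and> (\<forall>x. g (h x) = f x)))"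

definition finite_dim_alg :: "('k::field \<Rightarrow> 'a::ring_1 \<Rightarrow> 'a) \<Rightarrow> bool" where
  "finite_dim_alg scale \<longleftrightarrow> (\<exists>B. finite B \<and> module.span scale B = UNIV)"

definition semisimple :: "('k::field \<Rightarrow> 'a::ring_1 \<Rightarrow> 'a) \<Rightarrow> 'p::ab_group_add itself \<Rightarrow> 'm::ab_group_add itself \<Rightarrow> 'n::ab_group_add itself \<Rightarrow> bool" where
  "semisimple scale tp tm tn \<longleftrightarrow> finite_dim_alg scale \<and>
     (\<forall>sP :: 'a \<Rightarrow> 'p \<Rightarrow> 'p. lmod sP \<longrightarrow> projective_lmod sP tm tn)"

end

theory Submission
  imports Defs
begin


lemma sum_delta_sv:
  assumes vs: "vector_space sv" and fin: "finite S" and p: "p \<in> S"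
  shows "(\<Sum>q\<in>S. sv (delta p q) (\<beta> q)) = \<beta> p"
proof -
  interpret vector_space sv by fact
  have "(\<Sum>q\<in>S. sv (delta p q) (\<beta> q)) = (\<Sum>q\<in>S. if q = p then \<beta> q else 0)"
    by (rule sum.cong) (auto simp: delta_def)
  also have "\<dots> = \<beta> p" using fin p by (simp add: sum.delta')
  finally show ?thesis .
qed

definition supp_f :: "('a \<times> 'a \<Rightarrow> 'k::field) \<Rightarrow> ('a \<times> 'a) set" where
  "supp_f f = {q. f q \<noteq> 0}"

lemma sum_sv_extend:
  assumes vs: "vector_space sv" and fin: "finite S" "finite T" and sub: "supp_f f \<subseteq> S" "supp_f f \<subseteq> T"
  shows "(\<Sum>q\<in>S. sv (f q) (\<beta> q)) = (\<Sum>q\<in>T. sv (f q) (\<beta> q))"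
proof -
  interpret vector_space sv by fact
  have "(\<Sum>q\<in>S. sv (f q) (\<beta> q)) = (\<Sum>q\<in>S \<union> T. sv (f q) (\<beta> q))"
    by (rule sum.mono_neutral_left) (use fin sub in \<open>auto simp: supp_f_def\<close>)
  also have "\<dots> = (\<Sum>q\<in>T. sv (f q) (\<beta> q))"
    by (rule sum.mono_neutral_right) (use fin sub in \<open>auto simp: supp_f_def\<close>)
  finally show ?thesis .
qed

lemma sum_sv_extend_Un:
  assumes vs: "vector_space sv" and sub: "supp_f f \<subseteq> S" and fin: "finite S" "finite P"
  shows "(\<Sum>q\<in>S. sv (f q) (\<beta> q)) = (\<Sum>q\<in>S \<union> P. sv (f q) (\<beta> q))"
proof -
  have "supp_f f \<subseteq> S \<union> P" using sub by blast
  then show ?thesis using sum_sv_extend[OF vs fin(1) _ sub, of "S \<union> P"] fin by simp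
qed

lemma tens_null_vanish:
  fixes scale :: "'k::field \<Rightarrow> 'a::ring_1 \<Rightarrow> 'a" and sv :: "'k \<Rightarrow> 'v::ab_group_add \<Rightarrow> 'v"
  assumes vs: "vector_space sv"
    and aL: "\<And>x x' y. \<beta> (x + x', y) = \<beta> (x, y) + \<beta> (x', y)"
    and aR: "\<And>x y y'. \<beta> (x, y + y') = \<beta> (x, y) + \<beta> (x, y')"
    and sL: "\<And>c x y. \<beta> (scale c x, y) = sv c (\<beta> (x, y))"
    and sR: "\<And>c x y. \<beta> (x, scale c y) = sv c (\<beta> (x, y))"
    and f: "f \<in> tens_null scale"
  shows "finite (supp_f f) \<and> (\<forall>S. finite S \<longrightarrow> supp_f f \<subseteq> S \<longrightarrow> (\<Sum>q\<in>S. sv (f q) (\<beta> q)) = 0)"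
  using f
proof induction
  case zero
  interpret vector_space sv by fact
  show ?case by (simp add: supp_f_def)
next
  case (add f g)
  interpret vector_space sv by fact
  have sub: "supp_f (\<lambda>q. f q + g q) \<subseteq> supp_f f \<union> supp_f g" by (auto simp: supp_f_def)
  have fin: "finite (supp_f (\<lambda>q. f q + g q))" using add sub finite_subset by blast
  show ?case
  proof (intro conjI allI impI fin)
    fix S assume S: "finite S" "supp_f (\<lambda>q. f q + g q) \<subseteq> S"
    let ?T = "S \<union> supp_f f \<union> supp_f g"
    have "(\<Sum>q\<in>S. sv (f q + g q) (\<beta> q)) = (\<Sum>q\<in>?T. sv (f q + g q) (\<beta> q))"
      by (rule sum_sv_extend[OF vs]) (use S add in auto)
    also have "\<dots> = (\<Sum>q\<in>?T. sv (f q) (\<beta> q)) + (\<Sum>q\<in>?T. sv (g q) (\<beta> q))"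
      by (simp add: scale_left_distrib sum.distrib)
    also have "\<dots> = 0"
    proof -
      have "finite ?T" using S add by auto
      moreover have "supp_f f \<subseteq> ?T" "supp_f g \<subseteq> ?T" by auto
      ultimately show ?thesis using add(3,4) by simp
    qed
    finally show "(\<Sum>q\<in>S. sv (f q + g q) (\<beta> q)) = 0" .
  qed
next
  case (smult f c)
  interpret vector_space sv by fact
  have sub: "supp_f (\<lambda>q. c * f q) \<subseteq> supp_f f" by (auto simp: supp_f_def)
  have fin: "finite (supp_f (\<lambda>q. c * f q))" using smult sub finite_subset by blast
  show ?case
  proof (intro conjI allI impI fin)
    fix S assume S: "finite S" "supp_f (\<lambda>q. c * f q) \<subseteq> S"
    let ?T = "S \<union> supp_f f"
    have "(\<Sum>q\<in>S. sv (c * f q) (\<beta> q)) = (\<Sum>q\<in>?T. sv (c * f q) (\<beta> q))"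
      by (rule sum_sv_extend[OF vs]) (use S smult in auto)
    also have "\<dots> = sv c (\<Sum>q\<in>?T. sv (f q) (\<beta> q))"
      by (simp add: scale_sum_right)
    also have "\<dots> = 0"
    proof -
      have "finite ?T" using S smult by auto
      moreover have "supp_f f \<subseteq> ?T" by auto
      ultimately show ?thesis using smult(2) by simp
    qed
    finally show "(\<Sum>q\<in>S. sv (c * f q) (\<beta> q)) = 0" .
  qed
next
  case (add_left x x' y)
  interpret vector_space sv by fact
  let ?P = "{(x + x', y), (x, y), (x', y)}"
  have sub: "supp_f (\<lambda>q. (delta (x + x', y) q - delta (x, y) q - delta (x', y) q :: 'k)) \<subseteq> ?P"
    by (auto simp: supp_f_def delta_def)
  show ?case
  proof (intro conjI allI impI)
    show "finite (supp_f (\<lambda>q. (delta (x + x', y) q - delta (x, y) q - delta (x', y) q :: 'k)))"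
      using sub finite_subset by blast
    fix S assume S: "finite S" "supp_f (\<lambda>q. (delta (x + x', y) q - delta (x, y) q - delta (x', y) q :: 'k)) \<subseteq> S"
    let ?T = "S \<union> ?P"
    have "(\<Sum>q\<in>S. sv (delta (x + x', y) q - delta (x, y) q - delta (x', y) q) (\<beta> q))
      = (\<Sum>q\<in>?T. sv (delta (x + x', y) q - delta (x, y) q - delta (x', y) q) (\<beta> q))"
      by (rule sum_sv_extend_Un[OF vs S(2) S(1)]) simp
    also have "\<dots> = (\<Sum>q\<in>?T. sv (delta (x + x', y) q) (\<beta> q)) - (\<Sum>q\<in>?T. sv (delta (x, y) q) (\<beta> q))
        - (\<Sum>q\<in>?T. sv (delta (x', y) q) (\<beta> q))"
      by (simp add: scale_left_diff_distrib sum_subtractf)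
    also have "\<dots> = \<beta> (x + x', y) - \<beta> (x, y) - \<beta> (x', y)"
      using S by (simp add: sum_delta_sv[OF vs])
    also have "\<dots> = 0" by (simp add: aL)
    finally show "(\<Sum>q\<in>S. sv (delta (x + x', y) q - delta (x, y) q - delta (x', y) q) (\<beta> q)) = 0" .
  qed
next
  case (add_right x y y')
  interpret vector_space sv by fact
  let ?P = "{(x, y + y'), (x, y), (x, y')}"
  have sub: "supp_f (\<lambda>q. (delta (x, y + y') q - delta (x, y) q - delta (x, y') q :: 'k)) \<subseteq> ?P"
    by (auto simp: supp_f_def delta_def)
  show ?case
  proof (intro conjI allI impI)
    show "finite (supp_f (\<lambda>q. (delta (x, y + y') q - delta (x, y) q - delta (x, y') q :: 'k)))"
      using sub finite_subset by blast
    fix S assume S: "finite S" "supp_f (\<lambda>q. (delta (x, y + y') q - delta (x, y) q - delta (x, y') q :: 'k)) \<subseteq> S"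
    let ?T = "S \<union> ?P"
    have "(\<Sum>q\<in>S. sv (delta (x, y + y') q - delta (x, y) q - delta (x, y') q) (\<beta> q))
      = (\<Sum>q\<in>?T. sv (delta (x, y + y') q - delta (x, y) q - delta (x, y') q) (\<beta> q))"
      by (rule sum_sv_extend_Un[OF vs S(2) S(1)]) simp
    also have "\<dots> = (\<Sum>q\<in>?T. sv (delta (x, y + y') q) (\<beta> q)) - (\<Sum>q\<in>?T. sv (delta (x, y) q) (\<beta> q))
        - (\<Sum>q\<in>?T. sv (delta (x, y') q) (\<beta> q))"
      by (simp add: scale_left_diff_distrib sum_subtractf)
    also have "\<dots> = \<beta> (x, y + y') - \<beta> (x, y) - \<beta> (x, y')"
      using S by (simp add: sum_delta_sv[OF vs])
    also have "\<dots> = 0" by (simp add: aR)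
    finally show "(\<Sum>q\<in>S. sv (delta (x, y + y') q - delta (x, y) q - delta (x, y') q) (\<beta> q)) = 0" .
  qed
next
  case (scale_left c x y)
  interpret vector_space sv by fact
  let ?P = "{(scale c x, y), (x, y)}"
  have sub: "supp_f (\<lambda>q. (delta (scale c x, y) q - c * delta (x, y) q :: 'k)) \<subseteq> ?P"
    by (auto simp: supp_f_def delta_def)
  show ?case
  proof (intro conjI allI impI)
    show "finite (supp_f (\<lambda>q. (delta (scale c x, y) q - c * delta (x, y) q :: 'k)))"
      using sub finite_subset by blast
    fix S assume S: "finite S" "supp_f (\<lambda>q. (delta (scale c x, y) q - c * delta (x, y) q :: 'k)) \<subseteq> S"
    let ?T = "S \<union> ?P"
    have "(\<Sum>q\<in>S. sv (delta (scale c x, y) q - c * delta (x, y) q) (\<beta> q))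
      = (\<Sum>q\<in>?T. sv (delta (scale c x, y) q - c * delta (x, y) q) (\<beta> q))"
      by (rule sum_sv_extend_Un[OF vs S(2) S(1)]) simp
    also have "\<dots> = (\<Sum>q\<in>?T. sv (delta (scale c x, y) q) (\<beta> q)) - sv c (\<Sum>q\<in>?T. sv (delta (x, y) q) (\<beta> q))"
      by (simp add: scale_left_diff_distrib sum_subtractf scale_sum_right)
    also have "\<dots> = \<beta> (scale c x, y) - sv c (\<beta> (x, y))"
      using S by (simp add: sum_delta_sv[OF vs])
    also have "\<dots> = 0" by (simp add: sL)
    finally show "(\<Sum>q\<in>S. sv (delta (scale c x, y) q - c * delta (x, y) q) (\<beta> q)) = 0" .
  qed
next
  case (scale_right x c y)
  interpret vector_space sv by fact
  let ?P = "{(x, scale c y), (x, y)}"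
  have sub: "supp_f (\<lambda>q. (delta (x, scale c y) q - c * delta (x, y) q :: 'k)) \<subseteq> ?P"
    by (auto simp: supp_f_def delta_def)
  show ?case
  proof (intro conjI allI impI)
    show "finite (supp_f (\<lambda>q. (delta (x, scale c y) q - c * delta (x, y) q :: 'k)))"
      using sub finite_subset by blast
    fix S assume S: "finite S" "supp_f (\<lambda>q. (delta (x, scale c y) q - c * delta (x, y) q :: 'k)) \<subseteq> S"
    let ?T = "S \<union> ?P"
    have "(\<Sum>q\<in>S. sv (delta (x, scale c y) q - c * delta (x, y) q) (\<beta> q))
      = (\<Sum>q\<in>?T. sv (delta (x, scale c y) q - c * delta (x, y) q) (\<beta> q))"
      by (rule sum_sv_extend_Un[OF vs S(2) S(1)]) simp
    also have "\<dots> = (\<Sum>q\<in>?T. sv (delta (x, scale c y) q) (\<beta> q)) - sv c (\<Sum>q\<in>?T. sv (delta (x, y) q) (\<beta> q))"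
      by (simp add: scale_left_diff_distrib sum_subtractf scale_sum_right)
    also have "\<dots> = \<beta> (x, scale c y) - sv c (\<beta> (x, y))"
      using S by (simp add: sum_delta_sv[OF vs])
    also have "\<dots> = 0" by (simp add: sR)
    finally show "(\<Sum>q\<in>S. sv (delta (x, scale c y) q - c * delta (x, y) q) (\<beta> q)) = 0" .
  qed
qed



lemma tens_fun_Cons: "tens_fun (p # L) q = delta p q + tens_fun L q"
  unfolding tens_fun_def delta_def by auto

lemma tens_fun_Nil: "tens_fun [] q = 0"
  by (simp add: tens_fun_def)

lemma supp_tens_fun: "supp_f (tens_fun L :: _ \<Rightarrow> 'k::field) \<subseteq> set L"
proof (induction L)
  case Nil then show ?case by (simp add: supp_f_def tens_fun_Nil)
next
  case (Cons p L) then show ?case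
    unfolding supp_f_def tens_fun_Cons delta_def by auto
qed

lemma sum_tens_fun:
  assumes vs: "vector_space sv" and fin: "finite S" and sub: "set L \<subseteq> S"
  shows "(\<Sum>q\<in>S. sv (tens_fun L q) (\<beta> q)) = sum_list (map \<beta> L)"
  using sub
proof (induction L)
  case Nil
  interpret vector_space sv by fact
  show ?case by (simp add: tens_fun_Nil)
next
  case (Cons p L)
  interpret vector_space sv by fact
  have "(\<Sum>q\<in>S. sv (tens_fun (p # L) q) (\<beta> q)) = (\<Sum>q\<in>S. sv (delta p q) (\<beta> q)) + (\<Sum>q\<in>S. sv (tens_fun L q) (\<beta> q))"
    by (simp add: tens_fun_Cons scale_left_distrib sum.distrib)
  also have "\<dots> = \<beta> p + sum_list (map \<beta> L)"
    using Cons by (simp add: sum_delta_sv[OF vs fin])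
  finally show ?case by simp
qed

lemma tens_eq_sum:
  fixes scale :: "'k::field \<Rightarrow> 'a::ring_1 \<Rightarrow> 'a" and sv :: "'k \<Rightarrow> 'v::ab_group_add \<Rightarrow> 'v"
  assumes vs: "vector_space sv"
    and aL: "\<And>x x' y. \<beta> (x + x', y) = \<beta> (x, y) + \<beta> (x', y)"
    and aR: "\<And>x y y'. \<beta> (x, y + y') = \<beta> (x, y) + \<beta> (x, y')"
    and sL: "\<And>c x y. \<beta> (scale c x, y) = sv c (\<beta> (x, y))"
    and sR: "\<And>c x y. \<beta> (x, scale c y) = sv c (\<beta> (x, y))"
    and eq: "tens_eq scale L M"
  shows "sum_list (map \<beta> L) = sum_list (map \<beta> M)"
proof -
  interpret vector_space sv by fact
  let ?f = "\<lambda>q. tens_fun L q - tens_fun M q :: 'k"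
  have V: "finite (supp_f ?f) \<and> (\<forall>S. finite S \<longrightarrow> supp_f ?f \<subseteq> S \<longrightarrow> (\<Sum>q\<in>S. sv (?f q) (\<beta> q)) = 0)"
    by (rule tens_null_vanish[OF vs aL aR sL sR]) (use eq in \<open>simp add: tens_eq_def\<close>)
  let ?S = "set L \<union> set M \<union> supp_f ?f"
  have finS: "finite ?S" using V by simp
  have "(\<Sum>q\<in>?S. sv (?f q) (\<beta> q)) = 0"
    using V[THEN conjunct2, rule_format, OF finS] by (meson sup_ge2)
  moreover have "(\<Sum>q\<in>?S. sv (?f q) (\<beta> q)) = (\<Sum>q\<in>?S. sv (tens_fun L q) (\<beta> q)) - (\<Sum>q\<in>?S. sv (tens_fun M q) (\<beta> q))"
    unfolding scale_left_diff_distrib by (rule sum_subtractf)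
  moreover have "(\<Sum>q\<in>?S. sv (tens_fun L q) (\<beta> q)) = sum_list (map \<beta> L)"
    by (rule sum_tens_fun[OF vs finS]) auto
  moreover have "(\<Sum>q\<in>?S. sv (tens_fun M q) (\<beta> q)) = sum_list (map \<beta> M)"
    by (rule sum_tens_fun[OF vs finS]) auto
  ultimately show ?thesis by (metis eq_iff_diff_eq_0)
qed



lemma add_sum_list:
  fixes \<phi> :: "'b::ab_group_add \<Rightarrow> 'c::ab_group_add"
  assumes "\<And>u v. \<phi> (u + v) = \<phi> u + \<phi> v"
  shows "\<phi> (sum_list xs) = sum_list (map \<phi> xs)"
proof -
  have z: "\<phi> 0 = 0" using assms[of 0 0] by simp
  show ?thesis by (induction xs) (simp_all add: z assms)
qed

lemma swap_sum:
  fixes scale :: "'k::field \<Rightarrow> 'a::ring_1 \<Rightarrow> 'a" and sv :: "'k \<Rightarrow> 'v::ab_group_add \<Rightarrow> 'v"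
  assumes nf: "nearly_frobenius scale \<Delta>"
    and vs: "vector_space sv"
    and aL: "\<And>x x' y. \<beta> (x + x', y) = \<beta> (x, y) + \<beta> (x', y)"
    and aR: "\<And>x y y'. \<beta> (x, y + y') = \<beta> (x, y) + \<beta> (x, y')"
    and sL: "\<And>c x y. \<beta> (scale c x, y) = sv c (\<beta> (x, y))"
    and sR: "\<And>c x y. \<beta> (x, scale c y) = sv c (\<beta> (x, y))"
  shows "sum_list (map \<beta> (tens_ract (\<Delta> 1) a)) = sum_list (map \<beta> (tens_lact a (\<Delta> 1)))"
proof -
  have e1: "tens_eq scale (\<Delta> (1 * a)) (tens_ract (\<Delta> 1) a)" using nf unfolding nearly_frobenius_def by blast
  have e2: "tens_eq scale (\<Delta> (a * 1)) (tens_lact a (\<Delta> 1))" using nf unfolding nearly_frobenius_def by blast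
  have "sum_list (map \<beta> (\<Delta> a)) = sum_list (map \<beta> (tens_ract (\<Delta> 1) a))"
    using tens_eq_sum[OF vs aL aR sL sR e1] by simp
  moreover have "sum_list (map \<beta> (\<Delta> a)) = sum_list (map \<beta> (tens_lact a (\<Delta> 1)))"
    using tens_eq_sum[OF vs aL aR sL sR e2] by simp
  ultimately show ?thesis by simp
qed

lemma lmod_vs:
  fixes scale :: "'k::field \<Rightarrow> 'a::ring_1 \<Rightarrow> 'a" and sM :: "'a \<Rightarrow> 'm::ab_group_add \<Rightarrow> 'm"
  assumes alg: "k_algebra scale" and M: "lmod sM"
  shows "vector_space (\<lambda>c m. sM (scale c 1) m)"
proof -
  have vs: "vector_space scale" and ml: "\<And>c a b. scale c (a * b) = scale c a * b"
    using alg unfolding k_algebra_def by auto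
  interpret vector_space scale by fact
  have m: "\<And>a x y. sM a (x + y) = sM a x + sM a y" "\<And>a b x. sM (a + b) x = sM a x + sM b x"
    "\<And>a b x. sM (a * b) x = sM a (sM b x)" "\<And>x. sM 1 x = x"
    using M unfolding lmod_def by auto
  have p: "scale a 1 * scale b 1 = scale (a * b) 1" for a b
    using ml[of a 1 "scale b 1"] by simp
  show ?thesis
    unfolding vector_space_def
    by (simp add: m(1,2,4) scale_left_distrib flip: m(3) p)
qed

lemma lmod_additive:
  assumes "lmod sM" shows "sM a (x + y) = sM a x + sM a y" "sM (a + b) x = sM a x + sM b x"
    "sM (a * b) x = sM a (sM b x)" "sM 1 x = x"
  using assms unfolding lmod_def by auto

lemma projective:
  fixes scale :: "'k::field \<Rightarrow> 'a::ring_1 \<Rightarrow> 'a" and sP :: "'a \<Rightarrow> 'p::ab_group_add \<Rightarrow> 'p"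
  assumes alg: "k_algebra scale" and nnf: "normalized_nearly_frobenius scale \<Delta>" and P: "lmod sP"
  shows "projective_lmod sP TYPE('m::ab_group_add) TYPE('n::ab_group_add)"
  unfolding projective_lmod_def
proof (intro allI impI)
  fix sM :: "'a \<Rightarrow> 'm \<Rightarrow> 'm" and sN :: "'a \<Rightarrow> 'n \<Rightarrow> 'n" and g f
  assume H: "lmod sM \<and> lmod sN \<and> lhom sM sN g \<and> surj g \<and> lhom sP sN f"
  then have M: "lmod sM" and N: "lmod sN" and g: "lhom sM sN g" and sg: "surj g" and f: "lhom sP sN f" by auto
  have nf: "nearly_frobenius scale \<Delta>" and norm: "\<And>a. tens_mult (\<Delta> a) = a"
    using nnf unfolding normalized_nearly_frobenius_def by auto
  have vs: "vector_space scale" and ml: "\<And>c a b. scale c (a * b) = scale c a * b"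
    and mr: "\<And>c a b. scale c (a * b) = a * scale c b"
    using alg unfolding k_algebra_def by auto
  interpret A: vector_space scale by fact
  define smM where "smM = (\<lambda>c m. sM (scale c 1) m)"
  define smN where "smN = (\<lambda>c m. sN (scale c 1) m)"
  have vM: "vector_space smM" unfolding smM_def by (rule lmod_vs[OF alg M])
  have vN: "vector_space smN" unfolding smN_def by (rule lmod_vs[OF alg N])
  have gadd: "\<And>x y. g (x + y) = g x + g y" and geq: "\<And>a x. g (sM a x) = sN a (g x)"
    using g unfolding lhom_def by auto
  have fadd: "\<And>x y. f (x + y) = f x + f y" and feq: "\<And>a x. f (sP a x) = sN a (f x)"
    using f unfolding lhom_def by auto
  have lin: "Vector_Spaces.linear smM smN g"
    unfolding Vector_Spaces.linear_iff using vM vN gadd geq by (simp add: smM_def smN_def)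
  obtain s where s: "Vector_Spaces.linear smN smM s" and gs: "g \<circ> s = id"
  proof -
    interpret VP: vector_space_pair smM smN using vM vN by (simp add: vector_space_pair_def)
    show ?thesis using VP.linear_surjective_right_inverse[OF lin sg] that by blast
  qed
  have sadd: "\<And>x y. s (x + y) = s x + s y" and ssc: "\<And>c x. s (smN c x) = smM c (s x)"
    using s unfolding Vector_Spaces.linear_iff by auto
  have gs': "\<And>x. g (s x) = x" using gs by (simp add: fun_eq_iff)
  note mM = lmod_additive[OF M] and mN = lmod_additive[OF N] and mP = lmod_additive[OF P]
  define e where "e = \<Delta> 1"
  define \<beta> where "\<beta> p = (\<lambda>(x, y). sM x (s (f (sP y p))))" for p
  define h where "h p = sum_list (map (\<beta> p) e)" for p
  have sc1: "scale c 1 * x = scale c x" "x * scale c 1 = scale c x" for c x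
    using ml[of c 1 x] mr[of c x 1] by simp_all
  have bil: "\<beta> p (x + x', y) = \<beta> p (x, y) + \<beta> p (x', y)"
     "\<beta> p (x, y + y') = \<beta> p (x, y) + \<beta> p (x, y')"
     "\<beta> p (scale c x, y) = smM c (\<beta> p (x, y))"
     "\<beta> p (x, scale c y) = smM c (\<beta> p (x, y))" for p x x' y y' c
  proof -
    show "\<beta> p (x + x', y) = \<beta> p (x, y) + \<beta> p (x', y)" by (simp add: \<beta>_def mM)
    show "\<beta> p (x, y + y') = \<beta> p (x, y) + \<beta> p (x, y')" by (simp add: \<beta>_def mM mP fadd sadd)
    show "\<beta> p (scale c x, y) = smM c (\<beta> p (x, y))"
      by (simp add: \<beta>_def smM_def mM(3)[symmetric] sc1(1))
    have "sP (scale c y) p = sP (scale c 1) (sP y p)" by (simp add: mP(3)[symmetric] sc1(1))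
    have "\<beta> p (x, scale c y) = sM x (s (f (sP (scale c 1) (sP y p))))"
      by (simp only: \<beta>_def \<open>sP (scale c y) p = sP (scale c 1) (sP y p)\<close> split)
    also have "\<dots> = sM x (s (sN (scale c 1) (f (sP y p))))" by (simp only: feq)
    also have "\<dots> = sM x (sM (scale c 1) (s (f (sP y p))))"
      using ssc[unfolded smN_def smM_def] by simp
    also have "\<dots> = sM (scale c x) (s (f (sP y p)))" by (simp only: mM(3)[symmetric] sc1(2))
    also have "\<dots> = smM c (\<beta> p (x, y))"
      by (simp only: \<beta>_def smM_def split mM(3)[symmetric] sc1(1))
    finally show "\<beta> p (x, scale c y) = smM c (\<beta> p (x, y))" .
  qed
  have hadd: "h (p + q) = h p + h q" for p q
    unfolding h_def by (simp add: \<beta>_def mP fadd sadd mM split_def flip: sum_list_addf)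
  have heq: "h (sP a p) = sM a (h p)" for a p
  proof -
    have "h (sP a p) = sum_list (map (\<beta> p) (tens_ract e a))"
      unfolding h_def tens_ract_def by (simp add: \<beta>_def split_def mP o_def)
    also have "\<dots> = sum_list (map (\<beta> p) (tens_lact a e))"
      unfolding e_def by (rule swap_sum[OF nf vM]) (simp_all add: bil)
    also have "\<dots> = sM a (h p)"
      unfolding h_def tens_lact_def
      by (simp add: add_sum_list[of "sM a", OF mM(1)] \<beta>_def split_def mM o_def)
    finally show ?thesis .
  qed
  have ghf: "g (h p) = f p" for p
  proof -
    have "g (h p) = sum_list (map (\<lambda>(x, y). sN (x * y) (f p)) e)"
      unfolding h_def
      by (simp add: add_sum_list[of g, OF gadd] \<beta>_def split_def o_def geq gs' feq mN)
    also have "\<dots> = sN (tens_mult e) (f p)"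
      unfolding tens_mult_def
      by (simp add: add_sum_list[of "\<lambda>a. sN a (f p)", OF mN(2)] split_def o_def)
    also have "\<dots> = f p" using norm[of 1] by (simp add: e_def mN)
    finally show ?thesis .
  qed
  show "\<exists>h. lhom sP sM h \<and> (\<forall>x. g (h x) = f x)"
    by (rule exI[of _ h]) (simp add: lhom_def hadd heq ghf)
qed



lemma span_sum_list:
  assumes vs: "vector_space scale"
    and "\<And>p. p \<in> set xs \<Longrightarrow> t p \<in> module.span scale S"
  shows "sum_list (map t xs) \<in> module.span scale S"
  using assms(2)
proof (induction xs)
  case Nil
  interpret vector_space scale by fact
  show ?case by (simp add: span_zero)
next
  case (Cons a xs)
  interpret vector_space scale by fact
  show ?case using Cons by (simp add: span_add)
qed

lemma sum_list_sum_swap: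
  "sum_list (map (\<lambda>p. \<Sum>b\<in>F. t p b) xs) = (\<Sum>b\<in>F. sum_list (map (\<lambda>p. t p b) xs))"
  by (induction xs) (simp_all add: sum.distrib)

lemma span_right_mult:
  fixes scale :: "'k::field \<Rightarrow> 'a::ring_1 \<Rightarrow> 'a"
  assumes alg: "k_algebra scale" and z: "z \<in> module.span scale X"
  shows "z * b \<in> module.span scale ((\<lambda>x. x * b) ` X)"
proof -
  have vs: "vector_space scale" and ml: "\<And>c a b. scale c (a * b) = scale c a * b"
    using alg unfolding k_algebra_def by auto
  have mod: "module scale" using vs by (simp add: module_iff_vector_space)
  have "module_hom scale scale (\<lambda>x. x * b)"
    unfolding module_hom_iff using mod by (simp add: distrib_right ml)
  then interpret H: module_hom scale scale "\<lambda>x. x * b" .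
  show ?thesis using z by (simp add: H.span_image)
qed

lemma findim:
  fixes scale :: "'k::field \<Rightarrow> 'a::ring_1 \<Rightarrow> 'a"
  assumes alg: "k_algebra scale" and nnf: "normalized_nearly_frobenius scale \<Delta>"
  shows "finite_dim_alg scale"
proof -
  have nf: "nearly_frobenius scale \<Delta>" and norm: "\<And>a. tens_mult (\<Delta> a) = a"
    using nnf unfolding normalized_nearly_frobenius_def by auto
  have vs: "vector_space scale" and ml: "\<And>c a b. scale c (a * b) = scale c a * b"
    and mr: "\<And>c a b. scale c (a * b) = a * scale c b"
    using alg unfolding k_algebra_def by auto
  interpret A: vector_space scale by fact
  obtain B where indep: "A.independent B" and spB: "UNIV \<subseteq> A.span B"
    using A.basis_exists[of UNIV] by blast
  have spB': "A.span B = UNIV" using spB by auto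
  define r where "r y b = A.representation B y b" for y b
  have rlin: "r (y + y') b = r y b + r y' b" "r (scale c y) b = c * r y b" for y y' b c
  proof -
    have "Vector_Spaces.linear scale (*) (\<lambda>v. A.representation B v b)"
      by (rule A.linear_representation[OF indep spB'])
    then show "r (y + y') b = r y b + r y' b" "r (scale c y) b = c * r y b"
      unfolding Vector_Spaces.linear_iff r_def by auto
  qed
  define e where "e = \<Delta> 1"
  define X where "X = fst ` set e"
  define F where "F = (\<Union>p\<in>set e. {b. r (snd p) b \<noteq> 0})"
  define G where "G = (\<lambda>(x, b). x * b) ` (X \<times> F)"
  have finF: "finite F" unfolding F_def r_def by (auto intro: A.finite_representation)
  have finG: "finite G" unfolding G_def X_def using finF by simp
  have yrep: "snd p = (\<Sum>b\<in>F. scale (r (snd p) b) b)" if "p \<in> set e" for p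
  proof -
    have "(\<Sum>b\<in>F. scale (r (snd p) b) b) = (\<Sum>b | r (snd p) b \<noteq> 0. scale (r (snd p) b) b)"
      by (rule sum.mono_neutral_right) (use finF that in \<open>auto simp: F_def\<close>)
    also have "\<dots> = snd p"
      unfolding r_def by (rule A.sum_nonzero_representation_eq[OF indep]) (use spB in auto)
    finally show ?thesis by simp
  qed
  define w where "w a b = sum_list (map (\<lambda>(x, y). scale (r y b) (a * x)) e)" for a b
  have wspan: "w a b \<in> A.span X" for a b
  proof -
    define \<beta> where "\<beta> = (\<lambda>(x::'a, y). scale (r y b) x)"
    have "sum_list (map \<beta> (tens_ract (\<Delta> 1) a)) = sum_list (map \<beta> (tens_lact a (\<Delta> 1)))"
      by (rule swap_sum[OF nf vs])
         (simp_all add: \<beta>_def rlin A.scale_right_distrib A.scale_left_distrib)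
    moreover have "sum_list (map \<beta> (tens_lact a (\<Delta> 1))) = w a b"
      unfolding w_def tens_lact_def e_def by (simp add: \<beta>_def split_def o_def)
    moreover have "sum_list (map \<beta> (tens_ract (\<Delta> 1) a)) \<in> A.span X"
      unfolding tens_ract_def
    proof (rule span_sum_list[OF vs])
      fix p assume "p \<in> set (map (\<lambda>(x, y). (x, y * a)) (\<Delta> 1))"
      then obtain x y where p: "p = (x, y * a)" "(x, y) \<in> set e" by (auto simp: e_def)
      then have "x \<in> X" unfolding X_def by force
      then show "\<beta> p \<in> A.span X" using p by (simp add: \<beta>_def A.span_scale A.span_base)
    qed
    ultimately show ?thesis by simp
  qed
  have all: "a \<in> A.span G" for a
  proof -
    have "a = a * tens_mult e" using norm[of 1] by (simp add: e_def)
    also have "\<dots> = sum_list (map (\<lambda>p. (a * fst p) * snd p) e)"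
      unfolding tens_mult_def by (simp add: sum_list_const_mult split_def o_def mult.assoc)
    also have "\<dots> = sum_list (map (\<lambda>p. \<Sum>b\<in>F. scale (r (snd p) b) (a * fst p) * b) e)"
    proof (rule arg_cong[where f = sum_list], rule map_cong[OF refl])
      fix p assume p: "p \<in> set e"
      have "(a * fst p) * snd p = (a * fst p) * (\<Sum>b\<in>F. scale (r (snd p) b) b)"
        using yrep[OF p] by simp
      also have "\<dots> = (\<Sum>b\<in>F. scale (r (snd p) b) (a * fst p) * b)"
        unfolding sum_distrib_left by (intro sum.cong refl) (metis ml mr)
      finally show "(a * fst p) * snd p = (\<Sum>b\<in>F. scale (r (snd p) b) (a * fst p) * b)" .
    qed
    also have "\<dots> = (\<Sum>b\<in>F. w a b * b)"
      unfolding sum_list_sum_swap w_def by (simp add: sum_list_mult_const split_def o_def)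
    also have "\<dots> \<in> A.span G"
    proof (rule A.span_sum)
      fix b assume b: "b \<in> F"
      have "w a b * b \<in> A.span ((\<lambda>x. x * b) ` X)" by (rule span_right_mult[OF alg wspan])
      moreover have "(\<lambda>x. x * b) ` X \<subseteq> G" using b unfolding G_def by auto
      ultimately show "w a b * b \<in> A.span G" using A.span_mono by blast
    qed
    finally show ?thesis .
  qed
  show ?thesis unfolding finite_dim_alg_def using finG all by blast
qed


theorem corollary30:
  fixes scale :: "'k::field \<Rightarrow> 'a::ring_1 \<Rightarrow> 'a"
    and \<Delta> :: "'a \<Rightarrow> ('a \<times> 'a) list"
  assumes "k_algebra scale"
    and "normalized_nearly_frobenius scale \<Delta>"
  shows "semisimple scale TYPE('p::ab_group_add) TYPE('m::ab_group_add) TYPE('n::ab_group_add)"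
  unfolding semisimple_def
  using findim[OF assms] projective[OF assms] by blast

end
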